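(* Let $N\ge4$ be even. Take $X_j=\sigma_z$, $X_j'=\sigma_x$ for $j=1,\dots,N-1$, and $X_N=(\sigma_z+\sigma_x)/\sqrt2$, $X_N'=(\sigma_z-\sigma_x)/\sqrt2$, and let $I^N_{CHSH}=\sum_{a,b\in\{0,1\}}(-1)^{ab}\mathbb A_a\otimes\mathbb B_b$. Then $\langle G|I^N_{CHSH}|G\rangle=2\sqrt2$, $2\sqrt2$ is the largest eigenvalue of $I^N_{CHSH}$, and its eigenspace has dimension $2^{N-2}$; it is spanned by the orthonormal states $\bigotimes_{k\in K}\sigma_x^{(k)}|G\rangle$ where $K$ ranges over subsets of $\{1,\dots,N-1\}$ of even cardinality.
   Context: $|G\rangle=\frac{1}{\sqrt2}(|0\cdots0\rangle+|1\cdots1\rangle)$ is the $N$-qubit GHZ state; $\sigma_x,\sigma_y,\sigma_z$ are Pauli matrices and $\sigma_x^{(k)}$ denotes $\sigma_x$ acting on the $k$-th qubit (identity elsewhere). $\mathbb A_0=\bigotimes_{j=1}^{N-1}X_j$, $\mathbb A_1=\bigotimes_{j=1}^{N-1}X_j'$ act on qubits $1,\dots,N-1$, and $\mathbb B_0=X_N$, $\mathbb B_1=X_N'$ act on qubit $N$. *)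

theory Defs
  imports "Jordan_Normal_Form.Jordan_Normal_Form_Uniqueness"
begin

text \<open>Computational basis index i < 2^N; qubit k (1 \<le> k \<le> N) carries the bit
 (i div 2^(N-k)) mod 2, i.e. qubit 1 is the most significant bit.\<close>

definition qbit :: "nat \<Rightarrow> nat \<Rightarrow> nat \<Rightarrow> nat" where
  "qbit N k i = (i div 2 ^ (N - k)) mod 2"

text \<open>Kronecker (tensor) product A 1 (x) A 2 (x) ... (x) A N of single-qubit (2x2) operators.\<close>
definition tensor_ops :: "nat \<Rightarrow> (nat \<Rightarrow> complex mat) \<Rightarrow> complex mat" where
  "tensor_ops N A = mat (2 ^ N) (2 ^ N)
     (\<lambda>(i, j). \<Prod>k\<in>{1..N}. A k $$ (qbit N k i, qbit N k j))"

definition sigma_x :: "complex mat" where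
  "sigma_x = mat_of_rows_list 2 [[0, 1], [1, 0]]"

definition sigma_y :: "complex mat" where
  "sigma_y = mat_of_rows_list 2 [[0, -\<i>], [\<i>, 0]]"

definition sigma_z :: "complex mat" where
  "sigma_z = mat_of_rows_list 2 [[1, 0], [0, -1]]"

definition ghz :: "nat \<Rightarrow> complex vec" where
  "ghz N = vec (2 ^ N) (\<lambda>i. if i = 0 \<or> i = 2 ^ N - 1 then complex_of_real (1 / sqrt 2) else 0)"

definition X_obs :: "nat \<Rightarrow> nat \<Rightarrow> complex mat" where
  "X_obs N j = (if j = N then (complex_of_real (1 / sqrt 2)) \<cdot>\<^sub>m (sigma_z + sigma_x) else sigma_z)"

definition X'_obs :: "nat \<Rightarrow> nat \<Rightarrow> complex mat" where
  "X'_obs N j = (if j = N then (complex_of_real (1 / sqrt 2)) \<cdot>\<^sub>m (sigma_z - sigma_x) else sigma_x)"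

text \<open>A_a (x) B_b as an operator on the N qubits: A_0 = (x)_{j<N} X_j, A_1 = (x)_{j<N} X'_j,
  B_0 = X_N, B_1 = X'_N.\<close>
definition AB_op :: "nat \<Rightarrow> nat \<Rightarrow> nat \<Rightarrow> complex mat" where
  "AB_op N a b = tensor_ops N (\<lambda>j. if j < N then (if a = 0 then X_obs N j else X'_obs N j)
                                    else (if b = 0 then X_obs N j else X'_obs N j))"

definition I_CHSH :: "nat \<Rightarrow> complex mat" where
  "I_CHSH N = AB_op N 0 0 + AB_op N 0 1 + AB_op N 1 0 + (-1) \<cdot>\<^sub>m AB_op N 1 1"

definition flip_state :: "nat \<Rightarrow> nat set \<Rightarrow> complex vec" where
  "flip_state N K = tensor_ops N (\<lambda>j. if j \<in> K then sigma_x else 1\<^sub>m 2) *\<^sub>v ghz N"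

end

theory Submission
  imports Defs
begin


lemma bits_sum_mod: "(\<Sum>m<n. ((i::nat) div 2^m mod 2) * 2^m) = i mod 2^n"
proof (induction n)
  case 0 then show ?case by simp
next
  case (Suc n)
  have "i mod 2^(Suc n) = 2^n * (i div 2^n mod 2) + i mod 2^n"
    by (metis mod_mult2_eq power_Suc2)
  then show ?case using Suc by (simp add: mult.commute)
qed

lemma bits_sum_id: "(i::nat) < 2^n \<Longrightarrow> (\<Sum>m<n. (i div 2^m mod 2) * 2^m) = i"
  by (simp add: bits_sum_mod)

lemma enc_bits:
  fixes g :: "nat \<Rightarrow> nat"
  assumes "\<forall>m<n. g m \<le> 1"
  shows "(\<Sum>m<n. g m * 2^m) < 2^n \<and> (\<forall>j<n. (\<Sum>m<n. g m * 2^m) div 2^j mod 2 = g j)"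
  using assms
proof (induction n arbitrary: g)
  case 0 then show ?case by simp
next
  case (Suc n)
  define h where "h = (\<lambda>m. g (Suc m))"
  have hb: "\<forall>m<n. h m \<le> 1" using Suc.prems by (simp add: h_def)
  note IH = Suc.IH[OF hb]
  have eq: "(\<Sum>m<Suc n. g m * 2^m) = g 0 + 2 * (\<Sum>m<n. h m * 2^m)"
    unfolding h_def sum.lessThan_Suc_shift by (simp add: sum_distrib_left mult.assoc mult.left_commute)
  have g0: "g 0 \<le> 1" using Suc.prems by simp
  show ?case
  proof
    show "(\<Sum>m<Suc n. g m * 2^m) < 2^Suc n" using eq IH g0 by simp
    show "\<forall>j<Suc n. (\<Sum>m<Suc n. g m * 2 ^ m) div 2 ^ j mod 2 = g j"
    proof (intro allI impI)
      fix j assume j: "j < Suc n"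
      show "(\<Sum>m<Suc n. g m * 2 ^ m) div 2 ^ j mod 2 = g j"
      proof (cases j)
        case 0 then show ?thesis using eq g0 by simp
      next
        case (Suc j')
        have d2: "(g 0 + 2 * (\<Sum>m<n. h m * 2^m)) div 2 = (\<Sum>m<n. h m * 2^m)"
          using g0 by simp
        have "(g 0 + 2 * (\<Sum>m<n. h m * 2^m)) div 2 ^ j = (\<Sum>m<n. h m * 2^m) div 2^j'"
          using Suc d2 by (simp add: div_mult2_eq)
        then show ?thesis using eq IH Suc j by (simp add: h_def)
      qed
    qed
  qed
qed

definition enc :: "nat \<Rightarrow> (nat \<Rightarrow> nat) \<Rightarrow> nat" where
  "enc N g = (\<Sum>m<N. g (N - m) * 2^m)"

lemma qbit_lt2[simp]: "qbit N k i < 2" by (simp add: qbit_def)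

lemma enc_props:
  assumes "\<forall>k\<in>{1..N}. g k \<le> 1"
  shows "enc N g < 2^N" "k \<in> {1..N} \<Longrightarrow> qbit N k (enc N g) = g k"
proof -
  have b: "\<forall>m<N. g (N - m) \<le> 1" using assms by auto
  note E = enc_bits[OF b]
  show "enc N g < 2^N" using E by (simp add: enc_def)
  assume k: "k \<in> {1..N}"
  then have "N - k < N" by auto
  then have "enc N g div 2^(N-k) mod 2 = g (N - (N - k))" using E by (simp add: enc_def)
  then show "qbit N k (enc N g) = g k" using k by (simp add: qbit_def)
qed

lemma enc_qbit: "i < 2^N \<Longrightarrow> enc N (\<lambda>k. qbit N k i) = i"
proof -
  assume i: "i < 2^N"
  have "enc N (\<lambda>k. qbit N k i) = (\<Sum>m<N. (i div 2^m mod 2) * 2^m)"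
    unfolding enc_def qbit_def by (rule sum.cong) auto
  then show ?thesis using bits_sum_id[OF i] by simp
qed

lemma qbit_inj:
  assumes "i < 2^N" "j < 2^N" "\<forall>k\<in>{1..N}. qbit N k i = qbit N k j"
  shows "i = j"
proof -
  have "enc N (\<lambda>k. qbit N k i) = enc N (\<lambda>k. qbit N k j)"
    unfolding enc_def using assms(3) by (intro sum.cong) auto
  then show ?thesis using enc_qbit assms by metis
qed

definition cmp :: "nat \<Rightarrow> nat \<Rightarrow> nat" where
  "cmp N i = enc N (\<lambda>k. 1 - qbit N k i)"

lemma cmp_lt: "cmp N i < 2^N"
  unfolding cmp_def by (rule enc_props) auto

lemma qbit_cmp: "k \<in> {1..N} \<Longrightarrow> qbit N k (cmp N i) = 1 - qbit N k i"
  unfolding cmp_def by (rule enc_props) auto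

lemma cmp_cmp: "i < 2^N \<Longrightarrow> cmp N (cmp N i) = i"
proof -
  assume i: "i < 2^N"
  have "\<forall>k\<in>{1..N}. qbit N k (cmp N (cmp N i)) = qbit N k i"
  proof
    fix k assume k: "k \<in> {1..N}"
    have "qbit N k i < 2" by simp
    then show "qbit N k (cmp N (cmp N i)) = qbit N k i"
      using qbit_cmp[OF k, of "cmp N i"] qbit_cmp[OF k, of i] by arith
  qed
  then show ?thesis using qbit_inj[OF cmp_lt i] by blast
qed

lemma cmp_neq: "1 \<le> N \<Longrightarrow> cmp N i \<noteq> i"
proof
  assume N: "1 \<le> N" and e: "cmp N i = i"
  have "qbit N 1 (cmp N i) = 1 - qbit N 1 i" using N by (intro qbit_cmp) auto
  then have "qbit N 1 i = 1 - qbit N 1 i" using e by simp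
  then show False using qbit_lt2[of N 1 i] by arith
qed

lemma qbit_0[simp]: "qbit N k 0 = 0" by (simp add: qbit_def)

lemma enc_one: "enc N (\<lambda>_. 1) = 2^N - 1"
  unfolding enc_def using mask_eq_sum_exp_nat[of N] by (simp add: lessThan_def)

lemma qbit_M: "k \<in> {1..N} \<Longrightarrow> qbit N k (2^N - 1) = 1"
proof -
  assume k: "k \<in> {1..N}"
  have "qbit N k (enc N (\<lambda>_. 1)) = 1" by (rule enc_props(2)) (use k in auto)
  then show ?thesis unfolding enc_one .
qed

lemma cmp_0: "cmp N 0 = 2^N - 1"
proof -
  have "\<forall>k\<in>{1..N}. qbit N k (cmp N 0) = qbit N k (2^N - 1)"
  proof
    fix k assume k: "k \<in> {1..N}"
    show "qbit N k (cmp N 0) = qbit N k (2^N - 1)" unfolding qbit_cmp[OF k] qbit_M[OF k] by simp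
  qed
  moreover have "(2::nat)^N - 1 < 2^N" by simp
  ultimately show ?thesis using qbit_inj[OF cmp_lt] by blast
qed



lemma sz_entry: "p < 2 \<Longrightarrow> q < 2 \<Longrightarrow> sigma_z $$ (p,q) = (if p = q then (if p = 0 then 1 else -1) else 0)"
  by (auto simp: sigma_z_def mat_of_rows_list_def less_2_cases_iff)

lemma sx_entry: "p < 2 \<Longrightarrow> q < 2 \<Longrightarrow> sigma_x $$ (p,q) = (if p = q then 0 else 1)"
  by (auto simp: sigma_x_def mat_of_rows_list_def less_2_cases_iff)

lemma sz_dims[simp]: "dim_row sigma_z = 2" "dim_col sigma_z = 2" by (simp_all add: sigma_z_def mat_of_rows_list_def)
lemma sx_dims[simp]: "dim_row sigma_x = 2" "dim_col sigma_x = 2" by (simp_all add: sigma_x_def mat_of_rows_list_def)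
lemma sz_carrier[simp]: "sigma_z \<in> carrier_mat 2 2" by (rule carrier_matI) simp_all
lemma sx_carrier[simp]: "sigma_x \<in> carrier_mat 2 2" by (rule carrier_matI) simp_all

lemma tensor_carrier[simp]: "tensor_ops N A \<in> carrier_mat (2^N) (2^N)"
  by (simp add: tensor_ops_def)

lemma tensor_entry: "i < 2^N \<Longrightarrow> j < 2^N \<Longrightarrow>
   tensor_ops N A $$ (i,j) = (\<Prod>k\<in>{1..N}. A k $$ (qbit N k i, qbit N k j))"
  by (simp add: tensor_ops_def)

lemma AB_carrier[simp]: "AB_op N a b \<in> carrier_mat (2^N) (2^N)"
  unfolding AB_op_def by (rule tensor_carrier)

lemma I_carrier[simp]: "I_CHSH N \<in> carrier_mat (2^N) (2^N)"
  unfolding I_CHSH_def by (intro add_carrier_mat smult_carrier_mat AB_carrier)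

lemma prod_if_zero:
  assumes "finite A"
  shows "(\<Prod>k\<in>A. if P k then f k else (0::'a::comm_semiring_1)) = (if \<forall>k\<in>A. P k then prod f A else 0)"
proof (cases "\<forall>k\<in>A. P k")
  case True
  have "(\<Prod>k\<in>A. if P k then f k else (0::'a)) = prod f A"
    by (rule prod.cong) (use True in auto)
  then show ?thesis using True by simp
next
  case False
  then obtain k where k: "k \<in> A" "\<not> P k" by auto
  have "(\<Prod>k\<in>A. if P k then f k else (0::'a)) = 0"
    by (rule prod_zero) (use assms k in auto)
  moreover have "(if \<forall>k\<in>A. P k then prod f A else 0) = (0::'a)" using False by (rule if_not_P)
  ultimately show ?thesis by simp
qed

definition sgn_q :: "nat \<Rightarrow> nat \<Rightarrow> complex" where
  "sgn_q N i = (\<Prod>k\<in>{1..N}. if qbit N k i = 0 then 1 else -1)"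

lemma Zprod:
  assumes i: "i < 2^N" and j: "j < 2^N"
  shows "(\<Prod>k\<in>{1..N}. sigma_z $$ (qbit N k i, qbit N k j)) = (if j = i then sgn_q N i else 0)"
proof -
  have P: "(\<forall>k\<in>{1..N}. qbit N k i = qbit N k j) = (j = i)"
    using qbit_inj[OF i j] by auto
  have "(\<Prod>k\<in>{1..N}. sigma_z $$ (qbit N k i, qbit N k j)) = (\<Prod>k\<in>{1..N}. if qbit N k i = qbit N k j then (if qbit N k i = 0 then 1 else -1) else 0)"
    by (rule prod.cong) (simp_all add: sz_entry)
  also have "\<dots> = (if j = i then sgn_q N i else 0)"
    unfolding sgn_q_def P[symmetric] by (rule prod_if_zero) simp
  finally show ?thesis .
qed

lemma Xprod:
  assumes i: "i < 2^N" and j: "j < 2^N"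
  shows "(\<Prod>k\<in>{1..N}. sigma_x $$ (qbit N k i, qbit N k j)) = (if j = cmp N i then 1 else 0)"
proof -
  have "(\<Prod>k\<in>{1..N}. sigma_x $$ (qbit N k i, qbit N k j)) = (\<Prod>k\<in>{1..N}. if qbit N k j = 1 - qbit N k i then 1 else 0)"
  proof (rule prod.cong)
    fix k assume k: "k \<in> {1..N}"
    have "qbit N k i < 2" "qbit N k j < 2" by auto
    then have "(qbit N k i = qbit N k j) = (qbit N k j \<noteq> 1 - qbit N k i)" by arith
    then show "sigma_x $$ (qbit N k i, qbit N k j) = (if qbit N k j = 1 - qbit N k i then 1 else 0)"
      by (simp add: sx_entry)
  qed simp
  also have "\<dots> = (if j = cmp N i then 1 else 0)"
  proof -
    have P: "(\<forall>k\<in>{1..N}. qbit N k j = 1 - qbit N k i) = (j = cmp N i)"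
    proof
      assume "\<forall>k\<in>{1..N}. qbit N k j = 1 - qbit N k i"
      then have "\<forall>k\<in>{1..N}. qbit N k j = qbit N k (cmp N i)" using qbit_cmp by simp
      then show "j = cmp N i" using qbit_inj[OF j cmp_lt] by blast
    qed (use qbit_cmp in simp)
    show ?thesis unfolding P[symmetric] by (simp add: prod_if_zero)
  qed
  finally show ?thesis .
qed

lemma c2: "2 * complex_of_real (1 / sqrt 2) = complex_of_real (sqrt 2)"
proof -
  have "2 * (1 / sqrt 2) = sqrt (2::real)" by (simp add: field_simps)
  then show ?thesis by (metis of_real_mult of_real_numeral)
qed

lemma I_entry:
  assumes N: "1 \<le> N" and i: "i < 2^N" and j: "j < 2^N"
  shows "I_CHSH N $$ (i,j) = complex_of_real (sqrt 2) *
     ((if j = i then sgn_q N i else 0) + (if j = cmp N i then 1 else 0))"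
proof -
  define c where "c = complex_of_real (1 / sqrt 2)"
  define z where "z = (\<lambda>k. sigma_z $$ (qbit N k i, qbit N k j))"
  define x where "x = (\<lambda>k. sigma_x $$ (qbit N k i, qbit N k j))"
  have ins: "{1..N} = insert N {1..N-1}" using N by auto
  have nin: "N \<notin> {1..N-1}" by auto
  have XN: "X_obs N N $$ (qbit N N i, qbit N N j) = c * (z N + x N)"
    unfolding X_obs_def c_def z_def x_def using qbit_lt2[of N N i] qbit_lt2[of N N j] by simp
  have XN': "X'_obs N N $$ (qbit N N i, qbit N N j) = c * (z N - x N)"
    unfolding X'_obs_def c_def z_def x_def using qbit_lt2[of N N i] qbit_lt2[of N N j] by simp
  have AB: "AB_op N a b $$ (i,j) =
      (\<Prod>k\<in>{1..N-1}. (if a = 0 then z k else x k)) * (if b = 0 then c * (z N + x N) else c * (z N - x N))"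
    for a b
  proof -
    have "AB_op N a b $$ (i,j) = (\<Prod>k\<in>insert N {1..N-1}. (if k < N then (if a = 0 then X_obs N k else X'_obs N k)
                                    else (if b = 0 then X_obs N k else X'_obs N k)) $$ (qbit N k i, qbit N k j))"
      unfolding AB_op_def tensor_entry[OF i j] ins ..
    also have "\<dots> = (if b = 0 then X_obs N N else X'_obs N N) $$ (qbit N N i, qbit N N j) *
        (\<Prod>k\<in>{1..N-1}. (if k < N then (if a = 0 then X_obs N k else X'_obs N k)
                                    else (if b = 0 then X_obs N k else X'_obs N k)) $$ (qbit N k i, qbit N k j))"
      by (subst prod.insert[OF _ nin]) (simp_all only: finite_atLeastAtMost less_irrefl if_False)
    also have "(\<Prod>k\<in>{1..N-1}. (if k < N then (if a = 0 then X_obs N k else X'_obs N k)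
                                    else (if b = 0 then X_obs N k else X'_obs N k)) $$ (qbit N k i, qbit N k j))
        = (\<Prod>k\<in>{1..N-1}. (if a = 0 then z k else x k))"
      by (rule prod.cong) (auto simp: X_obs_def X'_obs_def z_def x_def)
    finally show ?thesis using XN XN' by (simp add: mult.commute)
  qed
  have entry: "I_CHSH N $$ (i,j) = (2 * c) * ((\<Prod>k\<in>{1..N-1}. z k) * z N + (\<Prod>k\<in>{1..N-1}. x k) * x N)"
  proof -
    have d: "dim_row (AB_op N a b) = 2^N" "dim_col (AB_op N a b) = 2^N" for a b
      using carrier_matD[OF AB_carrier] by auto
    have "I_CHSH N $$ (i,j) = AB_op N 0 0 $$ (i,j) + AB_op N 0 1 $$ (i,j) + AB_op N 1 0 $$ (i,j) - AB_op N 1 1 $$ (i,j)"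
      unfolding I_CHSH_def using i j d by simp
    also have "\<dots> = (\<Prod>k\<in>{1..N-1}. z k) * (c * (z N + x N)) + (\<Prod>k\<in>{1..N-1}. z k) * (c * (z N - x N))
       + (\<Prod>k\<in>{1..N-1}. x k) * (c * (z N + x N)) - (\<Prod>k\<in>{1..N-1}. x k) * (c * (z N - x N))"
      unfolding AB by simp
    finally show ?thesis by (simp add: algebra_simps)
  qed
  have pz: "(\<Prod>k\<in>{1..N-1}. z k) * z N = (\<Prod>k\<in>{1..N}. z k)"
    unfolding ins by (subst prod.insert[OF _ nin]) (simp_all add: mult.commute)
  have px: "(\<Prod>k\<in>{1..N-1}. x k) * x N = (\<Prod>k\<in>{1..N}. x k)"
    unfolding ins by (subst prod.insert[OF _ nin]) (simp_all add: mult.commute)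
  have "I_CHSH N $$ (i,j) = (2 * c) * ((\<Prod>k\<in>{1..N}. z k) + (\<Prod>k\<in>{1..N}. x k))"
    using entry unfolding pz px .
  also have "\<dots> = complex_of_real (sqrt 2) * ((if j = i then sgn_q N i else 0) + (if j = cmp N i then 1 else 0))"
    unfolding z_def x_def c_def c2 Zprod[OF i j] Xprod[OF i j] ..
  finally show ?thesis .
qed

lemma I_mult:
  assumes N: "1 \<le> N" and v: "v \<in> carrier_vec (2^N)" and i: "i < 2^N"
  shows "(I_CHSH N *\<^sub>v v) $ i = complex_of_real (sqrt 2) * (sgn_q N i * v $ i + v $ cmp N i)"
proof -
  have "(I_CHSH N *\<^sub>v v) $ i = (\<Sum>j<2^N. I_CHSH N $$ (i,j) * v $ j)"
  proof -
    have d: "dim_row (I_CHSH N) = 2^N" "dim_col (I_CHSH N) = 2^N" "dim_vec v = 2^N"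
      using carrier_matD[OF I_carrier[of N]] v by auto
    show ?thesis unfolding index_mult_mat_vec[OF i[folded d(1)]] scalar_prod_def d(3)
      unfolding lessThan_atLeast0 by (rule sum.cong) (simp_all add: d i)
  qed
  also have "\<dots> = (\<Sum>j<2^N. complex_of_real (sqrt 2) * ((if j = i then sgn_q N i * v $ i else 0) + (if j = cmp N i then v $ cmp N i else 0)))"
    by (rule sum.cong) (auto simp: I_entry[OF N i] algebra_simps)
  also have "\<dots> = complex_of_real (sqrt 2) * (sgn_q N i * v $ i + v $ cmp N i)"
    using i cmp_lt[of N i] by (simp add: sum_distrib_left[symmetric] sum.distrib)
  finally show ?thesis .
qed



definition gg :: complex where "gg = complex_of_real (1 / sqrt 2)"

lemma gg_sq: "gg * gg = 1/2"
proof -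
  have "(1 / sqrt 2) * (1 / sqrt 2) = (1/2::real)" by (simp add: field_simps)
  then show ?thesis unfolding gg_def by (metis of_real_mult of_real_divide of_real_1 of_real_numeral)
qed

lemma gg_nz: "gg \<noteq> 0" unfolding gg_def by simp

lemma sqrt2_gg: "complex_of_real (sqrt 2) * gg = 1"
proof -
  have "sqrt 2 * (1 / sqrt 2) = (1::real)" by simp
  then show ?thesis unfolding gg_def by (metis of_real_mult of_real_1)
qed

lemma ghz_carrier[simp]: "ghz N \<in> carrier_vec (2^N)" by (simp add: ghz_def)
lemma ghz_idx: "i < 2^N \<Longrightarrow> ghz N $ i = (if i = 0 \<or> i = 2^N - 1 then gg else 0)"
  by (simp add: ghz_def gg_def)

lemma sgn_q_pow: "sgn_q N i = (-1) ^ card {k\<in>{1..N}. qbit N k i \<noteq> 0}"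
proof -
  have "sgn_q N i = (\<Prod>k\<in>{1..N}. if qbit N k i \<noteq> 0 then -1 else 1)"
    unfolding sgn_q_def by (rule prod.cong) auto
  also have "\<dots> = (\<Prod>k\<in>{k\<in>{1..N}. qbit N k i \<noteq> 0}. -1)"
    by (rule prod.mono_neutral_cong_right) auto
  finally show ?thesis by simp
qed

lemma sgn_q_cases: "sgn_q N i = 1 \<or> sgn_q N i = -1"
  unfolding sgn_q_pow by (metis neg_one_even_power neg_one_odd_power)

lemma sgn_q_cmp:
  assumes "even N"
  shows "sgn_q N (cmp N i) = sgn_q N i"
proof -
  have "sgn_q N (cmp N i) = (\<Prod>k\<in>{1..N}. (-1) * (if qbit N k i = 0 then 1 else -1))"
    unfolding sgn_q_def
  proof (rule prod.cong)
    fix k assume k: "k \<in> {1..N}"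
    have "qbit N k i < 2" by simp
    then show "(if qbit N k (cmp N i) = 0 then 1 else -1) = (-1::complex) * (if qbit N k i = 0 then 1 else -1)"
      unfolding qbit_cmp[OF k] by (auto simp: less_2_cases_iff)
  qed simp
  also have "\<dots> = (-1) ^ N * sgn_q N i"
    unfolding sgn_q_def prod.distrib by simp
  finally show ?thesis using assms by simp
qed

lemma sgn_q_0: "sgn_q N 0 = 1" unfolding sgn_q_def by simp

lemma one2_entry: "p < 2 \<Longrightarrow> q < 2 \<Longrightarrow> (1\<^sub>m 2 :: complex mat) $$ (p,q) = (if p = q then 1 else 0)"
  by simp

definition idx :: "nat \<Rightarrow> nat set \<Rightarrow> nat" where
  "idx N K = enc N (\<lambda>k. if k \<in> K then 1 else 0)"

lemma idx_lt: "idx N K < 2^N" unfolding idx_def by (rule enc_props) auto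
lemma qbit_idx: "k \<in> {1..N} \<Longrightarrow> qbit N k (idx N K) = (if k \<in> K then 1 else 0)"
  unfolding idx_def by (rule enc_props) auto

lemma flip_carrier[simp]: "flip_state N K \<in> carrier_vec (2^N)"
  unfolding flip_state_def by (rule mult_mat_vec_carrier[OF tensor_carrier ghz_carrier])

lemma flip_T_entry:
  assumes i: "i < 2^N" and j: "j < 2^N"
  shows "tensor_ops N (\<lambda>j. if j \<in> K then sigma_x else 1\<^sub>m 2) $$ (i,j) =
    (if \<forall>k\<in>{1..N}. qbit N k i = (if k \<in> K then 1 - qbit N k j else qbit N k j) then 1 else 0)"
proof -
  have "tensor_ops N (\<lambda>j. if j \<in> K then sigma_x else 1\<^sub>m 2) $$ (i,j) =
     (\<Prod>k\<in>{1..N}. if qbit N k i = (if k \<in> K then 1 - qbit N k j else qbit N k j) then 1 else 0)"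
    unfolding tensor_entry[OF i j]
  proof (rule prod.cong)
    fix k assume k: "k \<in> {1..N}"
    have a: "qbit N k i < 2" "qbit N k j < 2" by auto
    show "(if k \<in> K then sigma_x else 1\<^sub>m 2) $$ (qbit N k i, qbit N k j) =
       (if qbit N k i = (if k \<in> K then 1 - qbit N k j else qbit N k j) then 1 else (0::complex))"
    proof (cases "k \<in> K")
      case True
      have "(qbit N k i = qbit N k j) = (qbit N k i \<noteq> 1 - qbit N k j)" using a by arith
      then show ?thesis using True a by (simp add: sx_entry)
    next
      case False then show ?thesis using a by simp
    qed
  qed simp
  also have "\<dots> = (if \<forall>k\<in>{1..N}. qbit N k i = (if k \<in> K then 1 - qbit N k j else qbit N k j) then 1 else 0)"
    by (simp add: prod_if_zero)
  finally show ?thesis .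
qed

lemma flip_entry:
  assumes N: "1 \<le> N" and i: "i < 2^N"
  shows "flip_state N K $ i = gg * ((if i = idx N K then 1 else 0) + (if i = cmp N (idx N K) then 1 else 0))"
proof -
  define T where "T = tensor_ops N (\<lambda>j. if j \<in> K then sigma_x else 1\<^sub>m 2)"
  define M where "M = (2::nat)^N - 1"
  have p2: "(2::nat)^1 \<le> 2^N" by (rule power_increasing) (use N in auto)
  have M: "M < 2^N" "M \<noteq> 0" unfolding M_def using p2 by auto
  have dT: "dim_row T = 2^N" "dim_col T = 2^N" unfolding T_def using carrier_matD[OF tensor_carrier] by auto
  have "flip_state N K $ i = (\<Sum>j<2^N. T $$ (i,j) * ghz N $ j)"
  proof -
    have dg: "dim_vec (ghz N) = 2^N" by (simp add: ghz_def)
    show ?thesis unfolding flip_state_def T_def[symmetric] index_mult_mat_vec[OF i[folded dT(1)]] scalar_prod_def dg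
      unfolding lessThan_atLeast0 by (rule sum.cong) (simp_all add: dT i)
  qed
  also have "\<dots> = (\<Sum>j<2^N. (if j = 0 then T $$ (i,0) * gg else 0) + (if j = M then T $$ (i,M) * gg else 0))"
    by (rule sum.cong) (use M in \<open>auto simp: ghz_idx M_def\<close>)
  also have "\<dots> = T $$ (i,0) * gg + T $$ (i,M) * gg"
    using M by (simp add: sum.distrib)
  also have "T $$ (i,0) = (if i = idx N K then 1 else 0)"
  proof -
    have "(\<forall>k\<in>{1..N}. qbit N k i = (if k \<in> K then 1 - qbit N k 0 else qbit N k 0)) = (i = idx N K)"
    proof
      assume "\<forall>k\<in>{1..N}. qbit N k i = (if k \<in> K then 1 - qbit N k 0 else qbit N k 0)"
      then have "\<forall>k\<in>{1..N}. qbit N k i = qbit N k (idx N K)" by (simp add: qbit_idx)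
      then show "i = idx N K" using qbit_inj[OF i idx_lt] by blast
    qed (simp add: qbit_idx)
    moreover have z: "(0::nat) < 2^N" by simp
    ultimately show ?thesis unfolding T_def flip_T_entry[OF i z] by simp
  qed
  also have "T $$ (i,M) = (if i = cmp N (idx N K) then 1 else 0)"
  proof -
    have qM: "k \<in> {1..N} \<Longrightarrow> qbit N k M = 1" for k unfolding M_def by (rule qbit_M)
    have "(\<forall>k\<in>{1..N}. qbit N k i = (if k \<in> K then 1 - qbit N k M else qbit N k M)) = (i = cmp N (idx N K))"
    proof
      assume "\<forall>k\<in>{1..N}. qbit N k i = (if k \<in> K then 1 - qbit N k M else qbit N k M)"
      then have "\<forall>k\<in>{1..N}. qbit N k i = qbit N k (cmp N (idx N K))" by (simp add: qbit_idx qbit_cmp qM)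
      then show "i = cmp N (idx N K)" using qbit_inj[OF i cmp_lt] by blast
    qed (simp add: qbit_idx qbit_cmp qM)
    then show ?thesis unfolding T_def flip_T_entry[OF i M(1)] by simp
  qed
  finally show ?thesis by (simp add: algebra_simps)
qed



lemma cscal_sum:
  assumes "u \<in> carrier_vec n" "w \<in> carrier_vec n"
  shows "u \<bullet>c w = (\<Sum>i<n. u $ i * cnj (w $ i))"
proof -
  have d: "dim_vec (conjugate w) = n" using assms by simp
  show ?thesis unfolding scalar_prod_def d lessThan_atLeast0
    by (rule sum.cong) (use assms in auto)
qed

lemma ghz_dim[simp]: "dim_vec (ghz N) = 2^N" by (simp add: ghz_def)

lemma cnj_gg[simp]: "cnj gg = gg" unfolding gg_def by simp

lemma M_facts:
  assumes N: "1 \<le> N"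
  shows "(2::nat)^N - 1 < 2^N" "(2::nat)^N - 1 \<noteq> 0"
proof -
  have p2: "(2::nat)^1 \<le> 2^N" by (rule power_increasing) (use N in auto)
  then show "(2::nat)^N - 1 < 2^N" "(2::nat)^N - 1 \<noteq> 0" by auto
qed

lemma I_ghz:
  assumes N: "1 \<le> N" and ev: "even N"
  shows "I_CHSH N *\<^sub>v ghz N = complex_of_real (2 * sqrt 2) \<cdot>\<^sub>v ghz N"
proof (rule eq_vecI)
  define M where "M = (2::nat)^N - 1"
  have M: "M < 2^N" "M \<noteq> 0" unfolding M_def using M_facts[OF N] by auto
  have c0: "cmp N 0 = M" unfolding M_def by (rule cmp_0)
  have cM: "cmp N M = 0" using cmp_cmp[of 0 N] c0 by simp
  have s0: "sgn_q N 0 = 1" by (rule sgn_q_0)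
  have sM: "sgn_q N M = 1" using sgn_q_cmp[OF ev, of 0] c0 s0 by simp
  have g: "\<And>i. i < 2^N \<Longrightarrow> ghz N $ i = (if i = 0 \<or> i = M then gg else 0)"
    unfolding M_def by (rule ghz_idx)
  show "dim_vec (I_CHSH N *\<^sub>v ghz N) = dim_vec (complex_of_real (2 * sqrt 2) \<cdot>\<^sub>v ghz N)"
    using carrier_matD[OF I_carrier[of N]] by (simp add: ghz_def)
  fix i assume "i < dim_vec (complex_of_real (2 * sqrt 2) \<cdot>\<^sub>v ghz N)"
  then have i: "i < 2^N" by (simp add: ghz_def)
  have L: "(I_CHSH N *\<^sub>v ghz N) $ i = complex_of_real (sqrt 2) * (sgn_q N i * ghz N $ i + ghz N $ cmp N i)"
    by (rule I_mult[OF N ghz_carrier i])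
  have R: "(complex_of_real (2 * sqrt 2) \<cdot>\<^sub>v ghz N) $ i = 2 * complex_of_real (sqrt 2) * ghz N $ i"
    using i by simp
  show "(I_CHSH N *\<^sub>v ghz N) $ i = (complex_of_real (2 * sqrt 2) \<cdot>\<^sub>v ghz N) $ i"
  proof (cases "i = 0 \<or> i = M")
    case True
    then show ?thesis
    proof
      assume i0: "i = 0"
      show ?thesis unfolding L R using i0 c0 s0 g[OF i] g[OF M(1)] M by simp
    next
      assume iM: "i = M"
      show ?thesis unfolding L R using iM cM sM g[OF M(1)] g[of 0] M by simp
    qed
  next
    case False
    have "cmp N i \<noteq> 0" using cmp_cmp[OF i] c0 False by metis
    moreover have "cmp N i \<noteq> M" using cmp_cmp[OF i] cM False by metis
    ultimately show ?thesis unfolding L R using False g[OF i] g[OF cmp_lt[of N i]] by simp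
  qed
qed

lemma ghz_nz: "1 \<le> N \<Longrightarrow> ghz N \<noteq> 0\<^sub>v (2^N)"
proof
  assume "ghz N = 0\<^sub>v (2^N)"
  then have "ghz N $ 0 = 0" by simp
  then show False using ghz_idx[of 0 N] gg_nz by simp
qed

lemma expect:
  assumes N: "1 \<le> N" and ev: "even N"
  shows "(I_CHSH N *\<^sub>v ghz N) \<bullet>c ghz N = complex_of_real (2 * sqrt 2)"
proof -
  define M where "M = (2::nat)^N - 1"
  have M: "M < 2^N" "M \<noteq> 0" unfolding M_def using M_facts[OF N] by auto
  have g: "\<And>i. i < 2^N \<Longrightarrow> ghz N $ i = (if i = 0 \<or> i = M then gg else 0)"
    unfolding M_def by (rule ghz_idx)
  define c where "c = complex_of_real (2 * sqrt 2)"
  have "(I_CHSH N *\<^sub>v ghz N) \<bullet>c ghz N = (\<Sum>i<2^N. (c \<cdot>\<^sub>v ghz N) $ i * cnj (ghz N $ i))"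
    unfolding I_ghz[OF N ev] c_def[symmetric] by (rule cscal_sum) auto
  also have "\<dots> = (\<Sum>i<2^N. (if i = 0 then c * gg * gg else 0) + (if i = M then c * gg * gg else 0))"
  proof (rule sum.cong)
    fix i :: nat assume "i \<in> {..<2^N}"
    then have i: "i < 2^N" by simp
    have dg: "dim_vec (ghz N) = 2^N" by (simp add: ghz_def)
    show "(c \<cdot>\<^sub>v ghz N) $ i * cnj (ghz N $ i) = (if i = 0 then c * gg * gg else 0) + (if i = M then c * gg * gg else 0)"
      using i dg g[OF i] M by auto
  qed simp
  also have "\<dots> = 2 * c * (gg * gg)" using M by (simp add: sum.distrib)
  also have "\<dots> = c" unfolding gg_sq by simp
  finally show ?thesis unfolding c_def .
qed

lemma eig_bound:
  assumes N: "1 \<le> N" and ev: "even N" and e: "eigenvalue (I_CHSH N) mu"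
  shows "Im mu = 0 \<and> Re mu \<le> 2 * sqrt 2"
proof -
  obtain v where v: "eigenvector (I_CHSH N) v mu" using e unfolding eigenvalue_def by auto
  have dr: "dim_row (I_CHSH N) = 2^N" using carrier_matD[OF I_carrier[of N]] by simp
  have vc: "v \<in> carrier_vec (2^N)" and vnz: "v \<noteq> 0\<^sub>v (2^N)" and Iv: "I_CHSH N *\<^sub>v v = mu \<cdot>\<^sub>v v"
    using v unfolding eigenvector_def dr by auto
  obtain i where i: "i < 2^N" and vi: "v $ i \<noteq> 0"
    using vnz vc by (metis eq_vecI carrier_vecD index_zero_vec(1) index_zero_vec(2))
  define a where "a = v $ i"
  define b where "b = v $ cmp N i"
  define s where "s = sgn_q N i"
  define r where "r = complex_of_real (sqrt 2)"
  have ci: "cmp N (cmp N i) = i" by (rule cmp_cmp[OF i])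
  have sc: "sgn_q N (cmp N i) = s" unfolding s_def by (rule sgn_q_cmp[OF ev])
  have e1: "r * (s * a + b) = mu * a"
    using I_mult[OF N vc i] arg_cong[OF Iv, of "\<lambda>w. w $ i"] i vc
    unfolding a_def b_def s_def r_def by simp
  have e2: "r * (s * b + a) = mu * b"
    using I_mult[OF N vc cmp_lt[of N i]] arg_cong[OF Iv, of "\<lambda>w. w $ cmp N i"] cmp_lt[of N i] vc ci sc
    unfolding a_def b_def s_def r_def by simp
  have rnz: "r \<noteq> 0" unfolding r_def by simp
  define t where "t = mu / r - s"
  have b1: "b = t * a" using e1 rnz unfolding t_def by (simp add: field_simps)
  have a1: "a = t * b" using e2 rnz unfolding t_def by (simp add: field_simps)
  have anz: "a \<noteq> 0" unfolding a_def by (rule vi)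
  have "a = t * t * a" using a1 b1 by simp
  then have "t * t = 1" using anz by (metis mult.commute mult_cancel_right1)
  then have t: "t = 1 \<or> t = -1" by (metis square_eq_1_iff power2_eq_square)
  have mu: "mu = r * (s + t)" unfolding t_def using rnz by (simp add: field_simps)
  have s: "s = 1 \<or> s = -1" unfolding s_def by (rule sgn_q_cases)
  have "mu = 2 * r \<or> mu = 0 \<or> mu = - 2 * r" using mu s t by auto
  then show ?thesis unfolding r_def by auto
qed



lemma E_char:
  assumes N: "1 \<le> N" and ev: "even N" and vc: "v \<in> carrier_vec (2^N)"
  shows "(I_CHSH N *\<^sub>v v = complex_of_real (2 * sqrt 2) \<cdot>\<^sub>v v) \<longleftrightarrow>
         (\<forall>i::nat. i < 2^N \<longrightarrow> v $ cmp N i = v $ i \<and> (sgn_q N i = -1 \<longrightarrow> v $ i = 0))"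
proof
  define r where "r = complex_of_real (sqrt 2)"
  have rnz: "r \<noteq> 0" unfolding r_def by simp
  have c22: "complex_of_real (2 * sqrt 2) = 2 * r" unfolding r_def by simp
  {
    assume Iv: "I_CHSH N *\<^sub>v v = complex_of_real (2 * sqrt 2) \<cdot>\<^sub>v v"
    show "\<forall>i::nat. i < 2^N \<longrightarrow> v $ cmp N i = v $ i \<and> (sgn_q N i = -1 \<longrightarrow> v $ i = 0)"
    proof (intro allI impI)
      fix i :: nat assume i: "i < 2^N"
      define a where "a = v $ i"
      define b where "b = v $ cmp N i"
      define s where "s = sgn_q N i"
      have ci: "cmp N (cmp N i) = i" by (rule cmp_cmp[OF i])
      have sc: "sgn_q N (cmp N i) = s" unfolding s_def by (rule sgn_q_cmp[OF ev])
      have e1: "r * (s * a + b) = 2 * r * a"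
        using I_mult[OF N vc i] arg_cong[OF Iv, of "\<lambda>w. w $ i"] i vc
        unfolding a_def b_def s_def r_def by simp
      have e2: "r * (s * b + a) = 2 * r * b"
        using I_mult[OF N vc cmp_lt[of N i]] arg_cong[OF Iv, of "\<lambda>w. w $ cmp N i"] cmp_lt[of N i] vc ci sc
        unfolding a_def b_def s_def r_def by simp
      have "r * (s * a + b) = r * (2 * a)" using e1 by (simp add: ac_simps)
      then have f1: "s * a + b = 2 * a" using rnz by simp
      have "r * (s * b + a) = r * (2 * b)" using e2 by (simp add: ac_simps)
      then have f2: "s * b + a = 2 * b" using rnz by simp
      have s: "s = 1 \<or> s = -1" unfolding s_def by (rule sgn_q_cases)
      have "b = a \<and> (s = -1 \<longrightarrow> a = 0)"
      proof (cases "s = 1")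
        case True then show ?thesis using f1 by simp
      next
        case False
        then have sm: "s = -1" using s by simp
        have "b = 3 * a" using f1 sm by (simp add: algebra_simps)
        moreover have "a = 3 * b" using f2 sm by (simp add: algebra_simps)
        ultimately have "a = 0" by simp
        then show ?thesis using \<open>b = 3 * a\<close> by simp
      qed
      then show "v $ cmp N i = v $ i \<and> (sgn_q N i = -1 \<longrightarrow> v $ i = 0)"
        unfolding a_def b_def s_def by simp
    qed
  }
  assume H: "\<forall>i::nat. i < 2^N \<longrightarrow> v $ cmp N i = v $ i \<and> (sgn_q N i = -1 \<longrightarrow> v $ i = 0)"
  show "I_CHSH N *\<^sub>v v = complex_of_real (2 * sqrt 2) \<cdot>\<^sub>v v"
  proof (rule eq_vecI)
    show "dim_vec (I_CHSH N *\<^sub>v v) = dim_vec (complex_of_real (2 * sqrt 2) \<cdot>\<^sub>v v)"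
      using carrier_matD[OF I_carrier[of N]] vc by simp
    fix i assume "i < dim_vec (complex_of_real (2 * sqrt 2) \<cdot>\<^sub>v v)"
    then have i: "i < 2^N" using vc by simp
    have s: "sgn_q N i = 1 \<or> sgn_q N i = -1" by (rule sgn_q_cases)
    have "(I_CHSH N *\<^sub>v v) $ i = r * (sgn_q N i * v $ i + v $ i)"
      using I_mult[OF N vc i] H i unfolding r_def by simp
    also have "\<dots> = 2 * r * v $ i" using s H i by auto
    finally show "(I_CHSH N *\<^sub>v v) $ i = (complex_of_real (2 * sqrt 2) \<cdot>\<^sub>v v) $ i"
      using i vc c22 by simp
  qed
qed

lemma qbitN_idx: "1 \<le> N \<Longrightarrow> K \<subseteq> {1..N-1} \<Longrightarrow> qbit N N (idx N K) = 0"
  using qbit_idx[of N N K] by auto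

lemma idx_inj: "K \<subseteq> {1..N} \<Longrightarrow> K' \<subseteq> {1..N} \<Longrightarrow> idx N K = idx N K' \<Longrightarrow> K = K'"
proof -
  assume K: "K \<subseteq> {1..N}" and K': "K' \<subseteq> {1..N}" and e: "idx N K = idx N K'"
  have "k \<in> K \<longleftrightarrow> k \<in> K'" for k
  proof (cases "k \<in> {1..N}")
    case True
    then show ?thesis using qbit_idx[OF True, of K] qbit_idx[OF True, of K'] e
      by (metis zero_neq_one)
  next
    case False then show ?thesis using K K' by auto
  qed
  then show "K = K'" by auto
qed

lemma idx_ne_cmp:
  assumes N: "1 \<le> N" and K: "K \<subseteq> {1..N-1}" and K': "K' \<subseteq> {1..N-1}"
  shows "idx N K \<noteq> cmp N (idx N K')"
proof
  assume e: "idx N K = cmp N (idx N K')"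
  have NN: "N \<in> {1..N}" using N by auto
  have "qbit N N (idx N K) = 0" by (rule qbitN_idx[OF N K])
  moreover have "qbit N N (cmp N (idx N K')) = 1"
    using qbit_cmp[OF NN] qbitN_idx[OF N K'] by simp
  ultimately show False using e by simp
qed

lemma sgn_idx: "K \<subseteq> {1..N} \<Longrightarrow> sgn_q N (idx N K) = (-1) ^ card K"
proof -
  assume K: "K \<subseteq> {1..N}"
  have "{k\<in>{1..N}. qbit N k (idx N K) \<noteq> 0} = K" using K qbit_idx[of _ N K] by (auto split: if_splits)
  then show ?thesis unfolding sgn_q_pow by simp
qed

definition Kof :: "nat \<Rightarrow> nat \<Rightarrow> nat set" where
  "Kof N i = {k\<in>{1..N-1}. qbit N k i = 1}"

lemma Kof_sub: "Kof N i \<subseteq> {1..N-1}" unfolding Kof_def by auto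

lemma idx_Kof:
  assumes N: "1 \<le> N" and i: "i < 2^N" and q: "qbit N N i = 0"
  shows "idx N (Kof N i) = i"
proof -
  have "\<forall>k\<in>{1..N}. qbit N k (idx N (Kof N i)) = qbit N k i"
  proof
    fix k assume k: "k \<in> {1..N}"
    have "qbit N k i = 0 \<or> qbit N k i = 1" using qbit_lt2[of N k i] by arith
    then show "qbit N k (idx N (Kof N i)) = qbit N k i"
      unfolding qbit_idx[OF k] Kof_def using k q by (cases "k = N") auto
  qed
  then show ?thesis using qbit_inj[OF idx_lt i] by blast
qed

lemma flip_props:
  assumes N: "1 \<le> N" and ev: "even N" and K: "K \<subseteq> {1..N-1}" "even (card K)" and i: "i < 2^N"
  shows "flip_state N K $ cmp N i = flip_state N K $ i \<and> (sgn_q N i = -1 \<longrightarrow> flip_state N K $ i = 0)"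
proof -
  define a where "a = idx N K"
  have a: "a < 2^N" unfolding a_def by (rule idx_lt)
  have K1: "K \<subseteq> {1..N}" by (rule order_trans[OF K(1)]) auto
  have sa: "sgn_q N a = 1" unfolding a_def sgn_idx[OF K1] using K(2) by simp
  have sca: "sgn_q N (cmp N a) = 1" using sgn_q_cmp[OF ev] sa by simp
  have f: "\<And>j. j < 2^N \<Longrightarrow> flip_state N K $ j = gg * ((if j = a then 1 else 0) + (if j = cmp N a then 1 else 0))"
    unfolding a_def by (rule flip_entry[OF N])
  have c1: "(cmp N i = a) = (i = cmp N a)" using cmp_cmp[OF i] cmp_cmp[OF a] by metis
  have c2: "(cmp N i = cmp N a) = (i = a)" using cmp_cmp[OF i] cmp_cmp[OF a] by metis
  have "flip_state N K $ cmp N i = flip_state N K $ i"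
    unfolding f[OF i] f[OF cmp_lt] c1 c2 by (simp add: algebra_simps)
  moreover have "sgn_q N i = -1 \<longrightarrow> flip_state N K $ i = 0"
    unfolding f[OF i] using sa sca by auto
  ultimately show ?thesis by simp
qed

lemma orthonormal:
  assumes N: "1 \<le> N" and K: "K \<subseteq> {1..N-1}" and K': "K' \<subseteq> {1..N-1}"
  shows "flip_state N K' \<bullet>c flip_state N K = (if K = K' then 1 else 0)"
proof -
  define a where "a = idx N K"
  define a' where "a' = idx N K'"
  have a: "a < 2^N" unfolding a_def by (rule idx_lt)
  have a': "a' < 2^N" unfolding a'_def by (rule idx_lt)
  have f: "\<And>j. j < 2^N \<Longrightarrow> flip_state N K $ j = gg * ((if j = a then 1 else 0) + (if j = cmp N a then 1 else 0))"
    unfolding a_def by (rule flip_entry[OF N])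
  have f': "\<And>j. j < 2^N \<Longrightarrow> flip_state N K' $ j = gg * ((if j = a' then 1 else 0) + (if j = cmp N a' then 1 else 0))"
    unfolding a'_def by (rule flip_entry[OF N])
  have ne1: "a \<noteq> cmp N a'" unfolding a_def a'_def by (rule idx_ne_cmp[OF N K K'])
  have ne2: "a' \<noteq> cmp N a" unfolding a_def a'_def by (rule idx_ne_cmp[OF N K' K])
  have ne3: "a \<noteq> cmp N a" using idx_ne_cmp[OF N K K] unfolding a_def .
  have K1: "K \<subseteq> {1..N}" by (rule order_trans[OF K]) auto
  have K1': "K' \<subseteq> {1..N}" by (rule order_trans[OF K']) auto
  have eqa: "(a = a') = (K = K')" unfolding a_def a'_def using idx_inj[OF K1 K1'] by auto
  have eqc: "(cmp N a = cmp N a') = (K = K')" using eqa cmp_cmp[OF a] cmp_cmp[OF a'] by metis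
  have "flip_state N K' \<bullet>c flip_state N K = (\<Sum>j<2^N. flip_state N K' $ j * cnj (flip_state N K $ j))"
    by (rule cscal_sum) auto
  also have "\<dots> = (\<Sum>j<2^N. (if j = a then flip_state N K' $ a * gg else 0) + (if j = cmp N a then flip_state N K' $ cmp N a * gg else 0))"
  proof (rule sum.cong)
    fix j :: nat assume "j \<in> {..<2^N}"
    then have j: "j < 2^N" by simp
    show "flip_state N K' $ j * cnj (flip_state N K $ j) = (if j = a then flip_state N K' $ a * gg else 0) + (if j = cmp N a then flip_state N K' $ cmp N a * gg else 0)"
      unfolding f[OF j] using ne3 by (auto simp: algebra_simps)
  qed simp
  also have "\<dots> = flip_state N K' $ a * gg + flip_state N K' $ cmp N a * gg"
    using a cmp_lt[of N a] ne3 by (simp add: sum.distrib)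
  also have "\<dots> = (if K = K' then 2 * (gg * gg) else 0)"
    unfolding f'[OF a] f'[OF cmp_lt] using ne1 ne2 eqa eqc by (auto simp: algebra_simps)
  also have "\<dots> = (if K = K' then 1 else 0)" unfolding gg_sq by simp
  finally show ?thesis .
qed



lemma char_mult:
  assumes A: "A \<in> carrier_mat n n" and v: "v \<in> carrier_vec n"
  shows "char_matrix A e *\<^sub>v v = A *\<^sub>v v + (-e) \<cdot>\<^sub>v v"
proof -
  have d: "dim_row A = n" using A by simp
  have "char_matrix A e *\<^sub>v v = A *\<^sub>v v + ((-e) \<cdot>\<^sub>m 1\<^sub>m n) *\<^sub>v v"
    unfolding char_matrix_def d by (rule add_mult_distrib_mat_vec[OF A _ v]) simp
  also have "((-e) \<cdot>\<^sub>m 1\<^sub>m n) *\<^sub>v v = (-e) \<cdot>\<^sub>v v" using v by auto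
  finally show ?thesis .
qed

lemma kernel_eq:
  assumes A: "A \<in> carrier_mat n n"
  shows "mat_kernel (char_matrix A e) = {v \<in> carrier_vec n. A *\<^sub>v v = e \<cdot>\<^sub>v v}"
proof -
  have C: "char_matrix A e \<in> carrier_mat n n" using A by simp
  have "v \<in> carrier_vec n \<Longrightarrow> (A *\<^sub>v v + (-e) \<cdot>\<^sub>v v = 0\<^sub>v n) = (A *\<^sub>v v = e \<cdot>\<^sub>v v)" for v
  proof
    assume v: "v \<in> carrier_vec n"
    have Av: "A *\<^sub>v v \<in> carrier_vec n" using A v by simp
    {
      assume H: "A *\<^sub>v v + (-e) \<cdot>\<^sub>v v = 0\<^sub>v n"
      show "A *\<^sub>v v = e \<cdot>\<^sub>v v"
      proof (rule eq_vecI)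
        fix i assume "i < dim_vec (e \<cdot>\<^sub>v v)"
        then have i: "i < n" using v by simp
        have "(A *\<^sub>v v + (-e) \<cdot>\<^sub>v v) $ i = 0" using H i by simp
        then have "(A *\<^sub>v v) $ i + (-e) * v $ i = 0" using Av v i by simp
        then show "(A *\<^sub>v v) $ i = (e \<cdot>\<^sub>v v) $ i" using i v by (simp add: algebra_simps)
      qed (use Av v A in simp)
    }
    assume "A *\<^sub>v v = e \<cdot>\<^sub>v v"
    then show "A *\<^sub>v v + (-e) \<cdot>\<^sub>v v = 0\<^sub>v n"
      by (intro eq_vecI) (use v in auto)
  qed
  then show ?thesis unfolding mat_kernel[OF C] using char_mult[OF A] by auto
qed

lemma card_even_subsets:
  assumes "finite S" "S \<noteq> {}"
  shows "2 * card {T. T \<subseteq> S \<and> even (card T)} = 2 ^ card S"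
proof -
  have eo: "card {T. T \<subseteq> S \<and> {} \<subseteq> T \<and> even(card T)} = card {T. T \<subseteq> S \<and> {} \<subseteq> T \<and> odd(card T)}"
    by (rule card_subsupersets_even_odd) (use assms in auto)
  have u: "Pow S = {T. T \<subseteq> S \<and> even (card T)} \<union> {T. T \<subseteq> S \<and> odd (card T)}" by auto
  have "card (Pow S) = card {T. T \<subseteq> S \<and> even (card T)} + card {T. T \<subseteq> S \<and> odd (card T)}"
    unfolding u by (rule card_Un_disjoint) (use assms in auto)
  then show ?thesis using eo assms(1) by (simp add: card_Pow)
qed

lemma Kof_idx: "K \<subseteq> {1..N-1} \<Longrightarrow> Kof N (idx N K) = K"
proof -
  assume K: "K \<subseteq> {1..N-1}"
  show ?thesis unfolding set_eq_iff
  proof (intro allI)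
    fix k
    show "k \<in> Kof N (idx N K) \<longleftrightarrow> k \<in> K"
    proof (cases "k \<in> {1..N-1}")
      case True
      have "qbit N k (idx N K) = (if k \<in> K then 1 else 0)" by (rule qbit_idx) (use True in auto)
      then show ?thesis unfolding Kof_def using True by simp
    next
      case False then show ?thesis unfolding Kof_def using K by auto
    qed
  qed
qed

lemma sum_KK0:
  assumes N: "1 \<le> N" and i: "i < 2^N" and q: "qbit N N i = 0"
  shows "(\<Sum>K\<in>{K. K \<subseteq> {1..N-1} \<and> even (card K)}. h K * ((if i = idx N K then 1 else 0) + (if i = cmp N (idx N K) then 1 else 0)))
     = (if even (card (Kof N i)) then h (Kof N i) else (0::complex))"
proof -
  let ?KK = "{K. K \<subseteq> {1..N-1} \<and> even (card K)}"
  have NN: "N \<in> {1..N}" using N by auto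
  have fin: "finite ?KK" by (rule finite_subset[of _ "Pow {1..N-1}"]) auto
  have "(\<Sum>K\<in>?KK. h K * ((if i = idx N K then 1 else 0) + (if i = cmp N (idx N K) then 1 else 0)))
      = (\<Sum>K\<in>?KK. if K = Kof N i then h K else 0)"
  proof (rule sum.cong)
    fix K assume "K \<in> ?KK"
    then have K: "K \<subseteq> {1..N-1}" by simp
    have K1: "K \<subseteq> {1..N}" by (rule order_trans[OF K]) auto
    have Ki1: "Kof N i \<subseteq> {1..N}" by (rule order_trans[OF Kof_sub]) auto
    have "i \<noteq> cmp N (idx N K)"
    proof
      assume "i = cmp N (idx N K)"
      then have "qbit N N i = 1" using qbit_cmp[OF NN] qbitN_idx[OF N K] by simp
      then show False using q by simp
    qed
    moreover have "(i = idx N K) = (K = Kof N i)"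
    proof
      assume "i = idx N K" then show "K = Kof N i" using Kof_idx[OF K] by simp
    next
      assume "K = Kof N i" then show "i = idx N K" using idx_Kof[OF N i q] by simp
    qed
    ultimately show "h K * ((if i = idx N K then 1 else 0) + (if i = cmp N (idx N K) then 1 else 0)) = (if K = Kof N i then h K else 0)"
      by simp
  qed simp
  also have "\<dots> = (if Kof N i \<in> ?KK then h (Kof N i) else 0)"
    using fin by (simp add: sum.delta')
  also have "\<dots> = (if even (card (Kof N i)) then h (Kof N i) else 0)"
    using Kof_sub[of N i] by simp
  finally show ?thesis .
qed

lemma sum_KK:
  assumes N: "1 \<le> N" and i: "i < 2^N"
  shows "(\<Sum>K\<in>{K. K \<subseteq> {1..N-1} \<and> even (card K)}. h K * ((if i = idx N K then 1 else 0) + (if i = cmp N (idx N K) then 1 else 0)))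
     = (if qbit N N i = 0 then (if even (card (Kof N i)) then h (Kof N i) else 0)
        else (if even (card (Kof N (cmp N i))) then h (Kof N (cmp N i)) else (0::complex)))"
proof (cases "qbit N N i = 0")
  case True then show ?thesis using sum_KK0[OF N i True] by simp
next
  case False
  have NN: "N \<in> {1..N}" using N by auto
  define j where "j = cmp N i"
  have j: "j < 2^N" unfolding j_def by (rule cmp_lt)
  have qj: "qbit N N j = 0" unfolding j_def qbit_cmp[OF NN] using False qbit_lt2[of N N i] by arith
  have ij: "i = cmp N j" unfolding j_def using cmp_cmp[OF i] by simp
  have e1: "(i = idx N K) = (j = cmp N (idx N K))" for K
    unfolding ij using cmp_cmp[OF j] cmp_cmp[OF idx_lt, of N K] by metis
  have e2: "(i = cmp N (idx N K)) = (j = idx N K)" for K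
    unfolding ij using cmp_cmp[OF j] cmp_cmp[OF idx_lt, of N K] by metis
  have "(\<Sum>K\<in>{K. K \<subseteq> {1..N-1} \<and> even (card K)}. h K * ((if i = idx N K then 1 else 0) + (if i = cmp N (idx N K) then 1 else 0)))
     = (\<Sum>K\<in>{K. K \<subseteq> {1..N-1} \<and> even (card K)}. h K * ((if j = idx N K then 1 else 0) + (if j = cmp N (idx N K) then 1 else 0)))"
    unfolding e1 e2 by (simp add: add.commute)
  also have "\<dots> = (if even (card (Kof N j)) then h (Kof N j) else 0)" by (rule sum_KK0[OF N j qj])
  finally show ?thesis using False unfolding j_def by simp
qed



theorem mainTheorem4:
  fixes N :: nat
  assumes "N \<ge> 4" and "even N"
  shows "(I_CHSH N *\<^sub>v ghz N) \<bullet>c ghz N = complex_of_real (2 * sqrt 2)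
     \<and> eigenvalue (I_CHSH N) (complex_of_real (2 * sqrt 2))
     \<and> (\<forall>mu. eigenvalue (I_CHSH N) mu \<longrightarrow> Im mu = 0 \<and> Re mu \<le> 2 * sqrt 2)
     \<and> dim_gen_eigenspace (I_CHSH N) (complex_of_real (2 * sqrt 2)) 1 = 2 ^ (N - 2)
     \<and> (\<forall>K\<in>{K. K \<subseteq> {1..N-1} \<and> even (card K)}. \<forall>K'\<in>{K. K \<subseteq> {1..N-1} \<and> even (card K)}.
          flip_state N K' \<bullet>c flip_state N K = (if K = K' then 1 else 0))
     \<and> {v \<in> carrier_vec (2 ^ N). I_CHSH N *\<^sub>v v = complex_of_real (2 * sqrt 2) \<cdot>\<^sub>v v}
       = module.span class_ring (module_vec TYPE(complex) (2 ^ N))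
           (flip_state N ` {K. K \<subseteq> {1..N-1} \<and> even (card K)})"
proof -
  have N: "1 \<le> N" using assms by simp
  have ev: "even N" by (rule assms(2))
  define KK where "KK = {K. K \<subseteq> {1..N-1} \<and> even (card K)}"
  define F where "F = flip_state N ` KK"
  define e where "e = complex_of_real (2 * sqrt 2)"
  define E where "E = {v \<in> carrier_vec (2 ^ N). I_CHSH N *\<^sub>v v = e \<cdot>\<^sub>v v}"
  interpret NC: vec_space "TYPE(complex)" "2^N" .
  have finKK: "finite KK" unfolding KK_def by (rule finite_subset[of _ "Pow {1..N-1}"]) auto
  have finF: "finite F" unfolding F_def using finKK by simp
  have Fc: "F \<subseteq> carrier_vec (2^N)" unfolding F_def by auto
  have orth: "\<forall>K\<in>KK. \<forall>K'\<in>KK. flip_state N K' \<bullet>c flip_state N K = (if K = K' then 1 else 0)"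
    unfolding KK_def using orthonormal[OF N] by auto
  have injF: "inj_on (flip_state N) KK"
  proof
    fix K K' assume K: "K \<in> KK" and K': "K' \<in> KK" and eq: "flip_state N K = flip_state N K'"
    have "flip_state N K \<bullet>c flip_state N K = 1" using orth K by simp
    then have "flip_state N K' \<bullet>c flip_state N K = 1" using eq by simp
    then show "K = K'" using orth K K' by (metis zero_neq_one)
  qed
  have cardKK: "card KK = 2^(N-2)"
  proof -
    have S: "finite {1..N-1}" "{1..N-1} \<noteq> {}" using assms by auto
    have "2 * card KK = 2 ^ (N - 1)" unfolding KK_def using card_even_subsets[OF S] by simp
    moreover have "N - 1 = Suc (N - 2)" using assms by arith
    then have "(2::nat) ^ (N - 1) = 2 * 2 ^ (N - 2)" by simp
    ultimately show ?thesis by simp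
  qed
  have Echar: "v \<in> E \<longleftrightarrow> v \<in> carrier_vec (2^N) \<and> (\<forall>i::nat. i < 2^N \<longrightarrow> v $ cmp N i = v $ i \<and> (sgn_q N i = -1 \<longrightarrow> v $ i = 0))" for v
    unfolding E_def e_def using E_char[OF N ev] by blast
  have FE: "F \<subseteq> E"
  proof
    fix w assume "w \<in> F"
    then obtain K where K: "K \<in> KK" and w: "w = flip_state N K" unfolding F_def by auto
    show "w \<in> E" unfolding Echar w using flip_props[OF N ev] K unfolding KK_def by auto
  qed
  have lincomb_expand: "NC.lincomb a F $ i = (\<Sum>K\<in>KK. (a (flip_state N K) * gg) * ((if i = idx N K then 1 else 0) + (if i = cmp N (idx N K) then 1 else 0)))"
    if i: "i < 2^N" for a i
  proof -
    have "NC.lincomb a F $ i = (\<Sum>x\<in>F. a x * x $ i)" by (rule NC.lincomb_index[OF i Fc])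
    also have "\<dots> = (\<Sum>K\<in>KK. a (flip_state N K) * flip_state N K $ i)"
      unfolding F_def by (rule sum.reindex[OF injF, unfolded comp_def])
    also have "\<dots> = (\<Sum>K\<in>KK. (a (flip_state N K) * gg) * ((if i = idx N K then 1 else 0) + (if i = cmp N (idx N K) then 1 else 0)))"
      by (rule sum.cong) (simp_all add: flip_entry[OF N i])
    finally show ?thesis .
  qed
  have spanF: "NC.span F = {NC.lincomb a F | a. True}"
    using NC.finite_span[OF finF Fc] by simp
  have span_eq: "E = NC.span F"
  proof
    show "E \<subseteq> NC.span F"
    proof
      fix v assume vE: "v \<in> E"
      then have vc: "v \<in> carrier_vec (2^N)" and P: "\<And>i. i < 2^N \<Longrightarrow> v $ cmp N i = v $ i \<and> (sgn_q N i = -1 \<longrightarrow> v $ i = 0)"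
        unfolding Echar by auto
      define a where "a = (\<lambda>w. complex_of_real (sqrt 2) * v $ idx N (inv_into KK (flip_state N) w))"
      have "v = NC.lincomb a F"
      proof (rule eq_vecI)
        show "dim_vec v = dim_vec (NC.lincomb a F)" using vc NC.lincomb_dim[OF finF Fc] by simp
        fix i assume "i < dim_vec (NC.lincomb a F)"
        then have i: "i < 2^N" using NC.lincomb_dim[OF finF Fc] by simp
        have "NC.lincomb a F $ i = (\<Sum>K\<in>KK. v $ idx N K * ((if i = idx N K then 1 else 0) + (if i = cmp N (idx N K) then 1 else 0)))"
          unfolding lincomb_expand[OF i]
        proof (rule sum.cong)
          fix K assume K: "K \<in> KK"
          have "a (flip_state N K) * gg = v $ idx N K"
            unfolding a_def inv_into_f_f[OF injF K] using sqrt2_gg by (simp add: ac_simps)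
          then show "a (flip_state N K) * gg * ((if i = idx N K then 1 else 0) + (if i = cmp N (idx N K) then 1 else 0))
            = v $ idx N K * ((if i = idx N K then 1 else 0) + (if i = cmp N (idx N K) then 1 else 0))" by simp
        qed simp
        also have "\<dots> = v $ i"
          unfolding KK_def sum_KK[OF N i]
        proof -
          have gen: "(if even (card (Kof N j)) then v $ idx N (Kof N j) else 0) = v $ j"
            if j: "j < 2^N" and qj: "qbit N N j = 0" for j
          proof (cases "even (card (Kof N j))")
            case True then show ?thesis using idx_Kof[OF N j qj] by simp
          next
            case False
            have K1: "Kof N j \<subseteq> {1..N}" by (rule order_trans[OF Kof_sub]) auto
            have "sgn_q N j = -1" using sgn_idx[OF K1] idx_Kof[OF N j qj] False by simp
            then show ?thesis using P[OF j] False by simp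
          qed
          have NN: "N \<in> {1..N}" using N by auto
          show "(if qbit N N i = 0 then if even (card (Kof N i)) then v $ idx N (Kof N i) else 0
               else if even (card (Kof N (cmp N i))) then v $ idx N (Kof N (cmp N i)) else 0) = v $ i"
          proof (cases "qbit N N i = 0")
            case True then show ?thesis using gen[OF i True] by simp
          next
            case False
            have q: "qbit N N (cmp N i) = 0" unfolding qbit_cmp[OF NN] using False qbit_lt2[of N N i] by arith
            show ?thesis using False gen[OF cmp_lt q] P[OF i] by simp
          qed
        qed
        finally show "v $ i = NC.lincomb a F $ i" by simp
      qed
      then show "v \<in> NC.span F" unfolding spanF by blast
    qed
    show "NC.span F \<subseteq> E"
    proof
      fix v assume "v \<in> NC.span F"
      then obtain a where v: "v = NC.lincomb a F" unfolding spanF by blast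
      have vc: "v \<in> carrier_vec (2^N)" unfolding v using NC.lincomb_closed[OF Fc] by simp
      have fp: "\<And>x i. x \<in> F \<Longrightarrow> i < 2^N \<Longrightarrow> x $ cmp N i = x $ i \<and> (sgn_q N i = -1 \<longrightarrow> x $ i = 0)"
      proof -
        fix x :: "complex vec" and i :: nat assume x: "x \<in> F" and i: "i < 2^N"
        have "x \<in> E" using FE x by auto
        then show "x $ cmp N i = x $ i \<and> (sgn_q N i = -1 \<longrightarrow> x $ i = 0)" using Echar[of x] i by auto
      qed
      show "v \<in> E" unfolding Echar
      proof (intro conjI vc allI impI)
        fix i :: nat assume i: "i < 2^N"
        show "v $ cmp N i = v $ i"
          unfolding v NC.lincomb_index[OF i Fc] NC.lincomb_index[OF cmp_lt Fc]
          by (rule sum.cong) (use fp[OF _ i] in auto)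
        assume "sgn_q N i = -1"
        then show "v $ i = 0"
          unfolding v NC.lincomb_index[OF i Fc] using fp[OF _ i] by simp
      qed
    qed
  qed
  have li: "NC.lin_indpt F"
  proof (rule NC.finite_lin_indpt2[OF finF Fc])
    fix a assume lc: "NC.lincomb a F = 0\<^sub>v (2^N)"
    show "\<forall>v\<in>F. a v = 0"
    proof
      fix w assume "w \<in> F"
      then obtain K where K: "K \<in> KK" and w: "w = flip_state N K" unfolding F_def by auto
      have Ks: "K \<subseteq> {1..N-1}" and Ke: "even (card K)" using K unfolding KK_def by auto
      have ik: "idx N K < 2^N" by (rule idx_lt)
      have q: "qbit N N (idx N K) = 0" by (rule qbitN_idx[OF N Ks])
      have "0 = NC.lincomb a F $ idx N K" using lc ik by simp
      also have "\<dots> = a (flip_state N K) * gg"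
        unfolding lincomb_expand[OF ik] KK_def sum_KK[OF N ik] using q Kof_idx[OF Ks] Ke by simp
      finally show "a w = 0" using gg_nz w by simp
    qed
  qed
  have cardF: "card F = 2^(N-2)" unfolding F_def using card_image[OF injF] cardKK by simp
  have dim: "dim_gen_eigenspace (I_CHSH N) e 1 = 2 ^ (N - 2)"
  proof -
    define C where "C = char_matrix (I_CHSH N) e"
    have Cc: "C \<in> carrier_mat (2^N) (2^N)" unfolding C_def by simp
    have dr: "dim_row (I_CHSH N) = 2^N" using carrier_matD[OF I_carrier[of N]] by simp
    have p1: "C ^\<^sub>m 1 = C" using Cc by simp
    interpret K: kernel "2^N" "2^N" C by (unfold_locales) (rule Cc)
    have ker: "mat_kernel C = E" unfolding C_def E_def by (rule kernel_eq[OF I_carrier])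
    have FK: "F \<subseteq> mat_kernel C" using FE ker by simp
    have "K.basis F"
      unfolding K.Ker.basis_def
    proof (intro conjI)
      show "K.lin_indpt F" using K.lindep_same[OF FK] li by simp
      show "K.span F = mat_kernel C" using K.span_same[OF FK] span_eq ker by simp
      show "F \<subseteq> mat_kernel C" by (rule FK)
    qed
    then have "K.dim = card F" by (intro K.Ker.dim_basis finF)
    then show ?thesis unfolding dim_gen_eigenspace_def C_def[symmetric] p1 K.kernel_dim cardF .
  qed
  have eig: "eigenvalue (I_CHSH N) e"
  proof -
    have dr: "dim_row (I_CHSH N) = 2^N" using carrier_matD[OF I_carrier[of N]] by simp
    show ?thesis unfolding eigenvalue_def eigenvector_def dr
      by (intro exI[of _ "ghz N"] conjI ghz_carrier ghz_nz[OF N]) (simp add: I_ghz[OF N ev] e_def)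
  qed
  show ?thesis
  proof (intro conjI)
    show "(I_CHSH N *\<^sub>v ghz N) \<bullet>c ghz N = complex_of_real (2 * sqrt 2)" by (rule expect[OF N ev])
    show "eigenvalue (I_CHSH N) (complex_of_real (2 * sqrt 2))" using eig unfolding e_def .
    show "\<forall>mu. eigenvalue (I_CHSH N) mu \<longrightarrow> Im mu = 0 \<and> Re mu \<le> 2 * sqrt 2"
      using eig_bound[OF N ev] by blast
    show "dim_gen_eigenspace (I_CHSH N) (complex_of_real (2 * sqrt 2)) 1 = 2 ^ (N - 2)" using dim unfolding e_def .
    show "\<forall>K\<in>{K. K \<subseteq> {1..N-1} \<and> even (card K)}. \<forall>K'\<in>{K. K \<subseteq> {1..N-1} \<and> even (card K)}.
          flip_state N K' \<bullet>c flip_state N K = (if K = K' then 1 else 0)" using orth unfolding KK_def .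
    show "{v \<in> carrier_vec (2 ^ N). I_CHSH N *\<^sub>v v = complex_of_real (2 * sqrt 2) \<cdot>\<^sub>v v}
       = module.span class_ring (module_vec TYPE(complex) (2 ^ N))
           (flip_state N ` {K. K \<subseteq> {1..N-1} \<and> even (card K)})"
      using span_eq unfolding E_def e_def F_def KK_def .
  qed
qed


end
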